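(* Let $S$ be an infinite set and $\mathcal{F}\subseteq 2^S$ a family closed under finite unions and finite intersections. Let $\mathbf{A}=(A_1,\dots,A_k)$ be a classification problem with $k\ge 2$. Then $\mathbf{A}\in\mathit{class}_k(\mathcal{F})$ if and only if $(A_i,A_j)\in\mathit{class}_2(\mathcal{F})$ for all $1\le i\ne j\le k$.
   Context: A classification problem is a vector $(A_1,\dots,A_k)$, $k\ge1$, of pairwise disjoint infinite subsets of $S$. For vectors $\mathbf{B}=(B_1,\dots,B_m)$ and $\mathbf{Q}=(Q_1,\dots,Q_k)$, $\mathbf{B}\leq\mathbf{Q}$ means $1\le m\le k$ and there is an injective $\sigma:\{1,\dots,m\}\to\{1,\dots,k\}$ with $B_i\subseteq Q_{\sigma(i)}$ for all $i$. An $\mathcal{F}$-partition is a vector $(Q_1,\dots,Q_k)$ of pairwise disjoint sets $Q_i\in\mathcal{F}$ with $Q_1\cup\dots\cup Q_k=S$. $\mathit{class}_k(\mathcal{F})$ is the set of classification problems $\mathbf{A}$ of length $k$ for which an $\mathcal{F}$-partition $\mathbf{Q}$ of length $k$ with $\mathbf{A}\leq\mathbf{Q}$ exists. *)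

theory Defs
  imports Main
begin

text \<open>Vectors (X_1,...,X_k) are represented 0-indexed as functions nat => 'a set,
  only the entries with index < k being relevant.\<close>

definition classification_problem :: "'a set \<Rightarrow> nat \<Rightarrow> (nat \<Rightarrow> 'a set) \<Rightarrow> bool" where
  "classification_problem S k A \<longleftrightarrow> k \<ge> 1 \<and> (\<forall>i<k. A i \<subseteq> S \<and> infinite (A i)) \<and>
     (\<forall>i<k. \<forall>j<k. i \<noteq> j \<longrightarrow> A i \<inter> A j = {})"

definition vec_le :: "nat \<Rightarrow> (nat \<Rightarrow> 'a set) \<Rightarrow> nat \<Rightarrow> (nat \<Rightarrow> 'a set) \<Rightarrow> bool" where
  "vec_le m B k Q \<longleftrightarrow> 1 \<le> m \<and> m \<le> k \<and>
     (\<exists>\<sigma>. inj_on \<sigma> {..<m} \<and> \<sigma> ` {..<m} \<subseteq> {..<k} \<and> (\<forall>i<m. B i \<subseteq> Q (\<sigma> i)))"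

definition F_partition :: "'a set \<Rightarrow> 'a set set \<Rightarrow> nat \<Rightarrow> (nat \<Rightarrow> 'a set) \<Rightarrow> bool" where
  "F_partition S F k Q \<longleftrightarrow> (\<forall>i<k. Q i \<in> F) \<and>
     (\<forall>i<k. \<forall>j<k. i \<noteq> j \<longrightarrow> Q i \<inter> Q j = {}) \<and> (\<Union>i<k. Q i) = S"

definition classk :: "'a set \<Rightarrow> 'a set set \<Rightarrow> nat \<Rightarrow> (nat \<Rightarrow> 'a set) set" where
  "classk S F k = {A. classification_problem S k A \<and> (\<exists>Q. F_partition S F k Q \<and> vec_le k A k Q)}"

end

theory Submission
  imports Defs
begin

lemma Inter_closed:
  assumes "finite I" "S \<in> F" "\<And>X Y. X \<in> F \<Longrightarrow> Y \<in> F \<Longrightarrow> X \<inter> Y \<in> F"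
    "\<forall>i\<in>I. f i \<in> F"
  shows "S \<inter> \<Inter>(f ` I) \<in> F"
  using assms(1,4)
proof (induction I rule: finite_induct)
  case empty then show ?case using assms(2) by simp
next
  case (insert x I)
  have "S \<inter> \<Inter>(f ` insert x I) = f x \<inter> (S \<inter> \<Inter>(f ` I))" by auto
  then show ?case using insert assms(3) by auto
qed

lemma Union_closed:
  assumes "finite I" "I \<noteq> {}" "\<And>X Y. X \<in> F \<Longrightarrow> Y \<in> F \<Longrightarrow> X \<union> Y \<in> F"
    "\<forall>i\<in>I. f i \<in> F"
  shows "\<Union>(f ` I) \<in> F"
  using assms(1,2,4)
proof (induction I rule: finite_ne_induct)
  case (singleton x) then show ?case by simp
next
  case (insert x I)
  then show ?case using assms(3) by auto
qed

lemma pair_sep: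
  assumes "(\<lambda>n. if n = 0 then A i else A j) \<in> classk S F 2"
  shows "\<exists>X. X \<in> F \<and> S - X \<in> F \<and> X \<subseteq> S \<and> A i \<subseteq> X \<and> A j \<subseteq> S - X"
proof -
  have "\<exists>Q. F_partition S F 2 Q \<and> vec_le 2 (\<lambda>n. if n = 0 then A i else A j) 2 Q"
    using assms unfolding classk_def by simp
  then obtain Q where QQ: "F_partition S F 2 Q \<and> vec_le 2 (\<lambda>n. if n = 0 then A i else A j) 2 Q" ..
  have FP: "F_partition S F 2 Q" using QQ by (rule conjunct1)
  have VL: "vec_le 2 (\<lambda>n. if n = 0 then A i else A j) 2 Q" using QQ by (rule conjunct2)
  have "\<exists>\<sigma>::nat\<Rightarrow>nat. inj_on \<sigma> {..<2} \<and> \<sigma> ` {..<2} \<subseteq> {..<2::nat} \<and>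
      (\<forall>n<2. (if n = 0 then A i else A j) \<subseteq> Q (\<sigma> n))"
    using VL unfolding vec_le_def by simp
  then obtain \<sigma> :: "nat \<Rightarrow> nat" where SS: "inj_on \<sigma> {..<2} \<and> \<sigma> ` {..<2} \<subseteq> {..<2::nat} \<and>
      (\<forall>n<2. (if n = 0 then A i else A j) \<subseteq> Q (\<sigma> n))" ..
  have inj: "inj_on \<sigma> {..<2}" using SS by (rule conjunct1)
  have rng: "\<sigma> ` {..<2} \<subseteq> {..<2::nat}" using SS by (rule conjunct1[OF conjunct2])
  have sub: "\<forall>n<2. (if n = 0 then A i else A j) \<subseteq> Q (\<sigma> n)" using SS by (rule conjunct2[OF conjunct2])
  have l2: "{..<2::nat} = {0, 1}" by auto
  have F1: "\<forall>i<2. Q i \<in> F" and F2: "\<forall>i<2. \<forall>j<2. i \<noteq> j \<longrightarrow> Q i \<inter> Q j = {}"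
    and F3: "(\<Union>i<2. Q i) = S" using FP unfolding F_partition_def by blast+
  have Q: "Q 0 \<in> F" "Q 1 \<in> F" "Q 0 \<inter> Q 1 = {}" "Q 0 \<union> Q 1 = S"
    using F1 F2[rule_format, of 0 1] F3 unfolding l2 by auto
  have QC: "S - Q 0 = Q 1" "S - Q 1 = Q 0" using Q(3,4) by blast+
  have s01: "0 \<in> {..<2::nat}" "1 \<in> {..<2::nat}" by auto
  have "\<sigma> 0 \<in> {..<2}" "\<sigma> 1 \<in> {..<2}" using rng s01 by blast+
  then have s: "\<sigma> 0 < 2" "\<sigma> 1 < 2" by simp_all
  have "\<sigma> 0 \<noteq> \<sigma> 1"
  proof
    assume "\<sigma> 0 = \<sigma> 1"
    then have "(0::nat) = 1" using inj_onD[OF inj _ s01] by blast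
    then show False by simp
  qed
  note s = s this
  have a: "A i \<subseteq> Q (\<sigma> 0)" "A j \<subseteq> Q (\<sigma> 1)"
    using sub[rule_format, of 0] sub[rule_format, of 1] by simp_all
  show ?thesis
  proof (cases "\<sigma> 0 = 0")
    case True
    then have "\<sigma> 1 = 1" using s by auto
    then show ?thesis using True a Q QC by (intro exI[of _ "Q 0"]) auto
  next
    case False
    then have "\<sigma> 0 = 1" "\<sigma> 1 = 0" using s by auto
    then show ?thesis using a Q QC by (intro exI[of _ "Q 1"]) auto
  qed
qed

theorem lemma2p3:
  fixes S :: "'a set" and F :: "'a set set" and A :: "nat \<Rightarrow> 'a set" and k :: nat
  assumes "infinite S"
    and "F \<subseteq> Pow S"
    and "\<And>X Y. X \<in> F \<Longrightarrow> Y \<in> F \<Longrightarrow> X \<union> Y \<in> F"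
    and "\<And>X Y. X \<in> F \<Longrightarrow> Y \<in> F \<Longrightarrow> X \<inter> Y \<in> F"
    and "classification_problem S k A"
    and "k \<ge> 2"
  shows "A \<in> classk S F k \<longleftrightarrow>
    (\<forall>i<k. \<forall>j<k. i \<noteq> j \<longrightarrow> (\<lambda>n. if n = 0 then A i else A j) \<in> classk S F 2)"
proof
  assume "A \<in> classk S F k"
  then obtain Q \<sigma> where FP: "F_partition S F k Q" and inj: "inj_on \<sigma> {..<k}"
    and rng: "\<sigma> ` {..<k} \<subseteq> {..<k}" and sub: "\<forall>i<k. A i \<subseteq> Q (\<sigma> i)"
    unfolding classk_def vec_le_def by blast
  have QF: "\<forall>i<k. Q i \<in> F" and Qd: "\<forall>i<k. \<forall>j<k. i \<noteq> j \<longrightarrow> Q i \<inter> Q j = {}"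
    and QU: "(\<Union>i<k. Q i) = S" using FP unfolding F_partition_def by auto
  show "\<forall>i<k. \<forall>j<k. i \<noteq> j \<longrightarrow> (\<lambda>n. if n = 0 then A i else A j) \<in> classk S F 2"
  proof (intro allI impI)
    fix i j assume ij: "i < k" "j < k" "i \<noteq> j"
    define B where "B = (\<lambda>n::nat. if n = 0 then A i else A j)"
    define I where "I = {l. l < k \<and> l \<noteq> \<sigma> i}"
    define Y where "Y = \<Union>(Q ` I)"
    have sij: "\<sigma> i < k" "\<sigma> j < k" "\<sigma> i \<noteq> \<sigma> j" using rng inj ij
      by (auto simp: inj_on_def)
    have YF: "Y \<in> F" unfolding Y_def
      by (rule Union_closed[OF _ _ assms(3)]) (use sij QF in \<open>auto simp: I_def\<close>)
    have X: "Q (\<sigma> i) \<in> F" using QF sij by auto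
    have "\<forall>l\<in>I. Q (\<sigma> i) \<inter> Q l = {}"
    proof
      fix l assume "l \<in> I"
      then have "l < k" "\<sigma> i \<noteq> l" unfolding I_def by auto
      then show "Q (\<sigma> i) \<inter> Q l = {}" using Qd sij(1) by simp
    qed
    then have dis: "Q (\<sigma> i) \<inter> Y = {}" unfolding Y_def by auto
    have "{..<k} = insert (\<sigma> i) I" using sij unfolding I_def by auto
    then have un: "Q (\<sigma> i) \<union> Y = S" using QU unfolding Y_def by simp
    have Ai: "A i \<subseteq> Q (\<sigma> i)" using sub ij by auto
    have Aj0: "A j \<subseteq> Q (\<sigma> j)" using sub ij by auto
    have "Q (\<sigma> j) \<subseteq> Y" using sij unfolding Y_def I_def by auto
    then have Aj: "A j \<subseteq> Y" using Aj0 by blast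
    define Q' where "Q' = (\<lambda>n::nat. if n = 0 then Q (\<sigma> i) else Y)"
    have cp: "classification_problem S 2 B"
      using assms(5) ij unfolding classification_problem_def B_def
      by (auto simp: numeral_2_eq_2 less_Suc_eq)
    have fp: "F_partition S F 2 Q'"
      unfolding F_partition_def Q'_def using X YF dis un
      by (auto simp: numeral_2_eq_2 less_Suc_eq lessThan_def)
    have vl: "vec_le 2 B 2 Q'"
      unfolding vec_le_def
      by (rule conjI, simp, rule conjI, simp, rule exI[of _ id])
         (use Ai Aj in \<open>auto simp: B_def Q'_def\<close>)
    show "(\<lambda>n. if n = 0 then A i else A j) \<in> classk S F 2"
      using cp fp vl unfolding classk_def B_def by blast
  qed
next
  assume H: "\<forall>i<k. \<forall>j<k. i \<noteq> j \<longrightarrow> (\<lambda>n. if n = 0 then A i else A j) \<in> classk S F 2"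
  have "\<forall>i j. \<exists>X. i < k \<and> j < k \<and> i \<noteq> j \<longrightarrow>
     X \<in> F \<and> S - X \<in> F \<and> X \<subseteq> S \<and> A i \<subseteq> X \<and> A j \<subseteq> S - X"
  proof (intro allI)
    fix i j show "\<exists>X. i < k \<and> j < k \<and> i \<noteq> j \<longrightarrow>
     X \<in> F \<and> S - X \<in> F \<and> X \<subseteq> S \<and> A i \<subseteq> X \<and> A j \<subseteq> S - X"
    proof (cases "i < k \<and> j < k \<and> i \<noteq> j")
      case True
      then have "(\<lambda>n. if n = 0 then A i else A j) \<in> classk S F 2" using H by blast
      from pair_sep[of A i j S F, OF this] show ?thesis by blast
    qed blast
  qed
  note ex = this
  define C where "C = (\<lambda>i j. SOME X. i < k \<and> j < k \<and> i \<noteq> j \<longrightarrow>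
     X \<in> F \<and> S - X \<in> F \<and> X \<subseteq> S \<and> A i \<subseteq> X \<and> A j \<subseteq> S - X)"
  have C: "C i j \<in> F \<and> S - C i j \<in> F \<and> C i j \<subseteq> S \<and> A i \<subseteq> C i j \<and> A j \<subseteq> S - C i j"
    if "i < k" "j < k" "i \<noteq> j" for i j
  proof -
    have "i < k \<and> j < k \<and> i \<noteq> j \<longrightarrow>
     C i j \<in> F \<and> S - C i j \<in> F \<and> C i j \<subseteq> S \<and> A i \<subseteq> C i j \<and> A j \<subseteq> S - C i j"
      unfolding C_def by (rule someI_ex) (rule ex[rule_format])
    then show ?thesis using that by blast
  qed
  define D where "D = (\<lambda>i j. if i < j then C i j else S - C j i)"
  have D: "D i j \<in> F" "D i j \<subseteq> S" "A i \<subseteq> D i j" "D i j \<inter> D j i = {}" "D i j \<union> D j i = S"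
    if "i < k" "j < k" "i \<noteq> j" for i j
  proof -
    have ci: "C i j \<in> F \<and> S - C i j \<in> F \<and> C i j \<subseteq> S \<and> A i \<subseteq> C i j \<and> A j \<subseteq> S - C i j"
      using C that by blast
    have cj: "C j i \<in> F \<and> S - C j i \<in> F \<and> C j i \<subseteq> S \<and> A j \<subseteq> C j i \<and> A i \<subseteq> S - C j i"
      using C that by blast
    have "D i j \<in> F \<and> D i j \<subseteq> S \<and> A i \<subseteq> D i j \<and> D i j \<inter> D j i = {} \<and> D i j \<union> D j i = S"
    proof (cases "i < j")
      case True
      then have "D i j = C i j" "D j i = S - C i j" unfolding D_def by auto
      then show ?thesis using ci by auto
    next
      case False
      then have "j < i" using that by simp
      then have "D i j = S - C j i" "D j i = C j i" unfolding D_def by auto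
      then show ?thesis using cj by auto
    qed
    then show "D i j \<in> F" "D i j \<subseteq> S" "A i \<subseteq> D i j" "D i j \<inter> D j i = {}" "D i j \<union> D j i = S"
      by auto
  qed
  have k01: "0 < k" "1 < k" "(0::nat) \<noteq> 1" using assms(6) by auto
  have SF: "S \<in> F"
  proof -
    have "D 0 1 \<union> D 1 0 \<in> F" using assms(3) D(1)[OF k01] D(1)[of 1 0] k01 by simp
    then show ?thesis using D(5)[OF k01] by simp
  qed
  define Q where "Q = (\<lambda>i. S \<inter> \<Inter>((\<lambda>j. D i j) ` {i<..<k})
        \<inter> \<Inter>((\<lambda>j. \<Union>((\<lambda>l. D l j) ` {j<..<k})) ` {..<i}))"
  have Qmem: "x \<in> Q i \<longleftrightarrow> x \<in> S \<and> (\<forall>j. i < j \<and> j < k \<longrightarrow> x \<in> D i j) \<and>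
      (\<forall>j<i. \<exists>l. j < l \<and> l < k \<and> x \<in> D l j)" for x i
    unfolding Q_def by (auto simp: Bex_def)
  have QF: "Q i \<in> F" if "i < k" for i
  proof -
    have "Q i = S \<inter> \<Inter>((\<lambda>j. D i j) ` {i<..<k})
        \<inter> (S \<inter> \<Inter>((\<lambda>j. \<Union>((\<lambda>l. D l j) ` {j<..<k})) ` {..<i}))"
      unfolding Q_def by auto
    moreover have "S \<inter> \<Inter>((\<lambda>j. D i j) ` {i<..<k}) \<in> F"
      by (rule Inter_closed[OF _ SF assms(4)]) (use D(1) that in auto)
    moreover have "S \<inter> \<Inter>((\<lambda>j. \<Union>((\<lambda>l. D l j) ` {j<..<k})) ` {..<i}) \<in> F"
    proof (rule Inter_closed[OF _ SF assms(4)])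
      show "\<forall>j\<in>{..<i}. \<Union>((\<lambda>l. D l j) ` {j<..<k}) \<in> F"
      proof
        fix j assume "j \<in> {..<i}"
        then have "j < i" by simp
        show "\<Union>((\<lambda>l. D l j) ` {j<..<k}) \<in> F"
          by (rule Union_closed[OF _ _ assms(3)]) (use D(1) that \<open>j < i\<close> in auto)
      qed
    qed simp
    ultimately show ?thesis using assms(4) by simp
  qed
  have Qd: "Q i \<inter> Q j = {}" if "i < k" "j < k" "i \<noteq> j" for i j
  proof -
    have "Q i \<inter> Q j = {}" if ij: "i < j" "j < k" for i j
    proof (rule ccontr)
      assume "Q i \<inter> Q j \<noteq> {}"
      then obtain x where x: "x \<in> Q i" "x \<in> Q j" by blast
      have "\<forall>j'<j. \<exists>l. j' < l \<and> l < k \<and> x \<in> D l j'" using x(2) Qmem by simp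
      then obtain l where l: "i < l" "l < k" "x \<in> D l i" using ij(1) by blast
      have "\<forall>j'. i < j' \<and> j' < k \<longrightarrow> x \<in> D i j'" using x(1) Qmem by simp
      then have "x \<in> D i l" using l by blast
      then show False using D(4)[of i l] l ij by auto
    qed
    note h = this
    show ?thesis
    proof (cases "i < j")
      case True then show ?thesis using h that by blast
    next
      case False then have "j < i" using that by simp
      then have "Q j \<inter> Q i = {}" using h that by blast
      then show ?thesis by (simp add: Int_commute)
    qed
  qed
  have QU: "(\<Union>i<k. Q i) = S"
  proof
    show "(\<Union>i<k. Q i) \<subseteq> S" unfolding Q_def by auto
  next
    show "S \<subseteq> (\<Union>i<k. Q i)"
    proof
      fix x assume xS: "x \<in> S"
      define P where "P = (\<lambda>i. \<forall>j. i < j \<and> j < k \<longrightarrow> x \<in> D i j)"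
      have Pk: "P (k - 1)" unfolding P_def by auto
      define i where "i = (LEAST i. P i)"
      have Pi: "P i" unfolding i_def by (rule LeastI[of P "k - 1", OF Pk])
      have ik: "i < k" using Least_le[of P "k-1", OF Pk] assms(6) unfolding i_def by simp
      have "\<forall>j<i. \<exists>l. j < l \<and> l < k \<and> x \<in> D l j"
      proof (intro allI impI)
        fix j assume ji: "j < i"
        have "\<not> P j" using not_less_Least[of j P] ji unfolding i_def by blast
        then obtain l where l: "j < l" "l < k" "x \<notin> D j l" unfolding P_def by blast
        then have "x \<in> D l j" using D(5)[of j l] xS by auto
        with l show "\<exists>l. j < l \<and> l < k \<and> x \<in> D l j" by blast
      qed
      then have "x \<in> Q i" using Pi xS unfolding Qmem P_def by blast
      then show "x \<in> (\<Union>i<k. Q i)" using ik by blast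
    qed
  qed
  have sub: "A i \<subseteq> Q i" if "i < k" for i
  proof
    fix x assume x: "x \<in> A i"
    have xS: "x \<in> S" using assms(5) that x unfolding classification_problem_def by auto
    have "\<forall>j. i < j \<and> j < k \<longrightarrow> x \<in> D i j"
    proof (intro allI impI)
      fix j assume "i < j \<and> j < k"
      then have "A i \<subseteq> D i j" using D(3)[of i j] that by simp
      then show "x \<in> D i j" using x by blast
    qed
    moreover have "\<forall>j<i. \<exists>l. j < l \<and> l < k \<and> x \<in> D l j"
    proof (intro allI impI)
      fix j assume "j < i"
      then have "x \<in> D i j" using D(3)[of i j] that x by auto
      then show "\<exists>l. j < l \<and> l < k \<and> x \<in> D l j" using \<open>j < i\<close> that by blast
    qed
    ultimately show "x \<in> Q i" using xS Qmem by simp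
  qed
  have fp: "F_partition S F k Q" unfolding F_partition_def
  proof (intro conjI allI impI)
    fix i assume "i < k" then show "Q i \<in> F" by (rule QF)
  next
    fix i j assume "i < k" "j < k" "i \<noteq> j" then show "Q i \<inter> Q j = {}" by (rule Qd)
  next
    show "(\<Union>i<k. Q i) = S" by (rule QU)
  qed
  have vl: "vec_le k A k Q"
    unfolding vec_le_def
  proof (intro conjI exI[of _ id])
    show "1 \<le> k" using assms(6) by simp
    show "k \<le> k" by simp
    show "inj_on id {..<k}" by simp
    show "id ` {..<k} \<subseteq> {..<k}" by simp
    show "\<forall>i<k. A i \<subseteq> Q (id i)" using sub by simp
  qed
  have "classification_problem S k A \<and> (\<exists>Q. F_partition S F k Q \<and> vec_le k A k Q)"
    using assms(5) fp vl by blast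
  then show "A \<in> classk S F k" unfolding classk_def by simp
qed

end
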